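(* Let $\mathcal H$ be a Berge-$C_4$-free hypergraph (multi-hyperedges allowed), and let $H$ be a colored graph on the vertex set of $\mathcal H$ obtained as follows: for each hyperedge $h\in\mathcal H$ with $|h|\ge 4$, one places $|h|-3$ edges on vertices of $h$ such that the set of edges placed in $h$ forms a collection of pairwise vertex-disjoint triangles and single edges, and each edge placed in $h$ receives color $h$ (each edge of $H$ has exactly one color). Let $v$ be any vertex of $H$, let $d(v)$ be its degree in $H$, let $N_1(v)=\{x : vx\in E(H)\}$ and $N_2(v)=\{y\notin N_1(v)\cup\{v\} : \exists x\in N_1(v) \text{ with } xy\in E(H)\}$. Let $G=H[N_1(v)]$ be the subgraph of $H$ induced by $N_1(v)$. Let $G_{aux}$ be the graph on vertex set $N_1(v)$ in which $x\neq y$ are adjacent if and only if there exists $w\in N_2(v)$ with $wx,wy\in E(H)$, and let $G'_{aux}$ be the graph on $N_1(v)$ whose edge set is $E(G_{aux})\setminus E(G)$. Then the number of edges of $G'_{aux}$ satisfies $$|E(G'_{aux})| < d(v)^{9/5}.$$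
   Context: A Berge cycle of length $k$ in a hypergraph is an alternating sequence $v_1,h_1,\ldots,v_k,h_k$ of distinct vertices and distinct hyperedges with $v_i,v_{i+1}\in h_i$ for $1\le i\le k-1$ and $v_k,v_1\in h_k$; Berge-$C_4$-free means no such sequence with $k=4$ exists. In $H$, an edge $xy$ "has color $h$" if it was placed inside hyperedge $h$. $xy$ denotes the pair $\{x,y\}$. *)

theory Defs
  imports Complex_Main
begin

text \<open>Hypergraph: finite vertex set V, finite set of hyperedge labels E (allowing
multi-hyperedges), hyperedge contents hh :: 'e => 'v set.\<close>

definition berge_C4_free :: "'e set \<Rightarrow> ('e \<Rightarrow> 'v set) \<Rightarrow> bool" where
  "berge_C4_free E hh \<longleftrightarrow>
     \<not> (\<exists>v1 v2 v3 v4 e1 e2 e3 e4.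
          distinct [v1, v2, v3, v4] \<and> distinct [e1, e2, e3, e4] \<and>
          e1 \<in> E \<and> e2 \<in> E \<and> e3 \<in> E \<and> e4 \<in> E \<and>
          v1 \<in> hh e1 \<and> v2 \<in> hh e1 \<and>
          v2 \<in> hh e2 \<and> v3 \<in> hh e2 \<and>
          v3 \<in> hh e3 \<and> v4 \<in> hh e3 \<and>
          v4 \<in> hh e4 \<and> v1 \<in> hh e4)"

definition disjoint_triangles_and_edges :: "'v set set \<Rightarrow> bool" where
  "disjoint_triangles_and_edges F \<longleftrightarrow>
     (\<exists>P. (\<forall>S\<in>P. card S = 2 \<or> card S = 3) \<and> pairwise disjnt P \<and>
          F = (\<Union>S\<in>P. {p. p \<subseteq> S \<and> card p = 2}))"

definition colored_graph_of ::
  "'v set \<Rightarrow> 'e set \<Rightarrow> ('e \<Rightarrow> 'v set) \<Rightarrow> 'v set set \<Rightarrow> ('v set \<Rightarrow> 'e) \<Rightarrow> bool" where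
  "colored_graph_of V E hh EH col \<longleftrightarrow>
     (\<forall>p\<in>EH. p \<subseteq> V \<and> card p = 2 \<and> col p \<in> E) \<and>
     (\<forall>e\<in>E.
        (card (hh e) \<ge> 4 \<longrightarrow>
           (\<forall>p\<in>{p\<in>EH. col p = e}. p \<subseteq> hh e) \<and>
           card {p\<in>EH. col p = e} = card (hh e) - 3 \<and>
           disjoint_triangles_and_edges {p\<in>EH. col p = e}) \<and>
        (card (hh e) < 4 \<longrightarrow> {p\<in>EH. col p = e} = {}))"

definition N1 :: "'v set set \<Rightarrow> 'v \<Rightarrow> 'v set" where
  "N1 EH v = {x. {v, x} \<in> EH}"

definition N2 :: "'v set set \<Rightarrow> 'v \<Rightarrow> 'v set" where
  "N2 EH v = {y. y \<notin> N1 EH v \<and> y \<noteq> v \<and> (\<exists>x\<in>N1 EH v. {x, y} \<in> EH)}"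

definition G_edges :: "'v set set \<Rightarrow> 'v \<Rightarrow> 'v set set" where
  "G_edges EH v = {p\<in>EH. p \<subseteq> N1 EH v}"

definition Gaux_edges :: "'v set set \<Rightarrow> 'v \<Rightarrow> 'v set set" where
  "Gaux_edges EH v = {{x, y} | x y. x \<in> N1 EH v \<and> y \<in> N1 EH v \<and> x \<noteq> y \<and>
       (\<exists>w\<in>N2 EH v. {w, x} \<in> EH \<and> {w, y} \<in> EH)}"

definition Gaux'_edges :: "'v set set \<Rightarrow> 'v \<Rightarrow> 'v set set" where
  "Gaux'_edges EH v = Gaux_edges EH v - G_edges EH v"

end

theory Submission
  imports Defs
begin

lemma dte_trans:
  assumes "disjoint_triangles_and_edges F" "{a,b} \<in> F" "{b,c} \<in> F" "a \<noteq> c"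
  shows "{a,c} \<in> F"
proof -
  obtain P where P: "\<forall>S\<in>P. card S = 2 \<or> card S = 3" "pairwise disjnt P"
    "F = (\<Union>S\<in>P. {p. p \<subseteq> S \<and> card p = 2})"
    using assms(1) unfolding disjoint_triangles_and_edges_def by blast
  obtain S1 where S1: "S1 \<in> P" "{a,b} \<subseteq> S1" using assms(2) P(3) by blast
  obtain S2 where S2: "S2 \<in> P" "{b,c} \<subseteq> S2" using assms(3) P(3) by blast
  have "S1 = S2" using S1 S2 P(2) unfolding pairwise_def disjnt_def by blast
  then have "{a,c} \<subseteq> S1" using S1 S2 by blast
  moreover have "card {a,c} = 2" using assms(4) by simp
  ultimately show ?thesis using P(3) S1 by blast
qed

lemma dte_star:
  assumes "disjoint_triangles_and_edges F"
  shows "card {a. {v,a} \<in> F} \<le> 2"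
proof (cases "{a. {v,a} \<in> F} = {}")
  case True then show ?thesis by simp
next
  case False
  obtain P where P: "\<forall>S\<in>P. card S = 2 \<or> card S = 3" "pairwise disjnt P"
    "F = (\<Union>S\<in>P. {p. p \<subseteq> S \<and> card p = 2})"
    using assms(1) unfolding disjoint_triangles_and_edges_def by blast
  obtain a0 where "{v,a0} \<in> F" using False by blast
  then obtain S0 where S0: "S0 \<in> P" "{v,a0} \<subseteq> S0" using P(3) by blast
  have sub: "{a. {v,a} \<in> F} \<subseteq> S0 - {v}"
  proof
    fix a assume "a \<in> {a. {v,a} \<in> F}"
    then have a: "{v,a} \<in> F" by simp
    then obtain S where S: "S \<in> P" "{v,a} \<subseteq> S" "card {v,a} = 2" using P(3) by blast
    have "S = S0" using S S0 P(2) unfolding pairwise_def disjnt_def by blast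
    moreover have "a \<noteq> v" using S(3) by (auto simp: card_insert_if)
    ultimately show "a \<in> S0 - {v}" using S by blast
  qed
  have c: "card S0 \<le> 3" and f: "finite S0" using P(1) S0(1)
    by (metis le_refl numeral_le_iff semiring_norm(69) semiring_norm(72) one_le_numeral, metis card.infinite zero_neq_numeral)
  have "card (S0 - {v}) = card S0 - 1" using S0 f by simp
  then have "card (S0 - {v}) \<le> 2" using c by simp
  then show ?thesis using card_mono[OF _ sub] f by (meson finite_Diff le_trans)
qed


lemma final_ineq:
  fixes d g :: nat
  assumes "d \<ge> 1" "g \<le> 10 * d" "g \<le> d * (d - 1) div 2"
  shows "real g < real d powr (9/5)"
proof -
  define r where "r = real d powr (4/5)"
  have dpos: "real d > 0" using assms(1) by simp
  have r0: "r \<ge> 0" unfolding r_def by simp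
  have r5: "r ^ 5 = real d ^ 4"
  proof -
    have "r ^ 5 = real d powr (real 5 * (4/5))"
      unfolding r_def using dpos by (intro powr_power) simp
    also have "real 5 * (4/5) = (4::real)" by simp
    also have "real d powr (4::real) = real d ^ 4" using dpos by simp
    finally show ?thesis .
  qed
  have split: "real d powr (9/5) = real d * r"
  proof -
    have "real d * r = real d powr 1 * real d powr (4/5)" unfolding r_def using dpos by simp
    also have "\<dots> = real d powr (1 + 4/5)" by (rule powr_add[symmetric])
    also have "(1 + 4/5 :: real) = 9/5" by simp
    finally show ?thesis by simp
  qed
  show ?thesis
  proof (cases "d \<le> 31")
    case True
    have a: "(real d - 1) ^ 5 < real d ^ 5"
      using assms(1) by (intro power_strict_mono) auto
    have b: "real d ^ 5 \<le> 31 * real d ^ 4"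
    proof -
      have "real d ^ 5 = real d * real d ^ 4" by (simp add: power_Suc[symmetric] del: power_Suc)
      also have "\<dots> \<le> 31 * real d ^ 4" using True by (intro mult_right_mono) auto
      finally show ?thesis .
    qed
    have p4: "real d ^ 4 > 0" using dpos by simp
    have c: "(real d - 1) ^ 5 < 32 * real d ^ 4" using a b p4 by linarith
    have "((real d - 1) / 2) ^ 5 < r ^ 5"
      using c unfolding r5 by (simp add: power_divide)
    then have "(real d - 1) / 2 < r"
      using r0 by (rule power_less_imp_less_base)
    then have "real d * ((real d - 1) / 2) < real d * r"
      using dpos by simp
    moreover have "real g \<le> real d * ((real d - 1) / 2)"
    proof -
      have "2 * g \<le> d * (d - 1)" using assms(3) by linarith
      then have "real (2 * g) \<le> real (d * (d - 1))" by linarith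
      then show ?thesis using assms(1) by (simp add: of_nat_diff)
    qed
    ultimately show ?thesis using split by linarith
  next
    case False
    then have "real d \<ge> 32" by simp
    then have "(10::real) ^ 5 < real d ^ 4"
    proof -
      have "(32::real) ^ 4 \<le> real d ^ 4" using \<open>real d \<ge> 32\<close> by (intro power_mono) auto
      then show ?thesis by simp
    qed
    then have "(10::real) ^ 5 < r ^ 5" using r5 by simp
    then have "10 < r" using r0 by (rule power_less_imp_less_base)
    then have "real d * 10 < real d * r" using dpos by simp
    then show ?thesis using assms(2) split by linarith
  qed
qed


theorem lemma2:
  fixes V :: "'v set" and E :: "'e set" and hh :: "'e \<Rightarrow> 'v set"
    and EH :: "'v set set" and col :: "'v set \<Rightarrow> 'e" and v :: 'v
  assumes "finite V" and "finite E" and "\<forall>e\<in>E. hh e \<subseteq> V"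
    and "berge_C4_free E hh"
    and "colored_graph_of V E hh EH col"
    and "v \<in> V"
    and "N1 EH v \<noteq> {}"
  shows "real (card (Gaux'_edges EH v)) < real (card (N1 EH v)) powr (9/5)"
proof -
  define N where "N = N1 EH v"
  note cg = assms(5)[unfolded colored_graph_of_def]
  have EHV: "\<And>p. p \<in> EH \<Longrightarrow> p \<subseteq> V \<and> card p = 2 \<and> col p \<in> E" using cg by blast
  have edge_in: "\<And>p. p \<in> EH \<Longrightarrow> p \<subseteq> hh (col p)"
  proof -
    fix p assume p: "p \<in> EH"
    have ce: "col p \<in> E" using EHV[OF p] by blast
    have "p \<in> {q\<in>EH. col q = col p}" using p by simp
    then have "\<not> card (hh (col p)) < 4" using cg ce by blast
    then show "p \<subseteq> hh (col p)" using cg ce p by auto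
  qed
  have dte: "\<And>p. p \<in> EH \<Longrightarrow> disjoint_triangles_and_edges {q\<in>EH. col q = col p}"
  proof -
    fix p assume p: "p \<in> EH"
    have ce: "col p \<in> E" using EHV[OF p] by blast
    have "p \<in> {q\<in>EH. col q = col p}" using p by simp
    then have "\<not> card (hh (col p)) < 4" using cg ce by blast
    then show "disjoint_triangles_and_edges {q\<in>EH. col q = col p}" using cg ce by auto
  qed
  have adj: "{a,c} \<in> EH" if "{a,b} \<in> EH" "{b,c} \<in> EH" "col {a,b} = col {b,c}" "a \<noteq> c" for a b c
  proof -
    have "{a,c} \<in> {q\<in>EH. col q = col {a,b}}"
      using dte_trans[OF dte[OF that(1)], of a b c] that by auto
    then show ?thesis by simp
  qed
  have NV: "N \<subseteq> V" using EHV unfolding N_def N1_def by blast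
  have finN: "finite N" using NV assms(1) finite_subset by blast
  have vN: "v \<notin> N" unfolding N_def N1_def using EHV by fastforce
  have dpos: "card N \<ge> 1" using finN assms(7) unfolding N_def
    by (simp add: Suc_leI card_gt_0_iff)
  define g where "g a = col {v,a}" for a
  define K where "K = g ` N"
  define Col where "Col b = {C \<in> K. b \<in> hh C}" for b
  have Kv: "\<And>C. C \<in> K \<Longrightarrow> v \<in> hh C \<and> C \<in> E"
    using edge_in EHV unfolding K_def g_def N_def N1_def by fastforce
  have finK: "finite K" unfolding K_def using finN by simp
  have cardK: "card K \<le> card N" unfolding K_def using finN by (rule card_image_le)
  have finCol: "\<And>b. finite (Col b)" unfolding Col_def using finK by simp
  have berge: False if "distinct [v1,v2,v3,v4]" "distinct [e1,e2,e3,e4]"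
     "e1 \<in> E" "e2 \<in> E" "e3 \<in> E" "e4 \<in> E" "v1 \<in> hh e1" "v2 \<in> hh e1"
     "v2 \<in> hh e2" "v3 \<in> hh e2" "v3 \<in> hh e3" "v4 \<in> hh e3" "v4 \<in> hh e4" "v1 \<in> hh e4"
     for v1 v2 v3 v4 e1 e2 e3 e4
    using assms(4) that unfolding berge_C4_free_def by blast
  define Q where "Q = {(a,b). a \<in> N \<and> b \<in> N \<and> b \<in> hh (g a)}"
  have stepA: "Gaux'_edges EH v \<subseteq> (\<lambda>(a,b). {a,b}) ` Q"
  proof
    fix p assume p: "p \<in> Gaux'_edges EH v"
    then obtain x y w where xy: "p = {x,y}" "x \<in> N" "y \<in> N" "x \<noteq> y" "w \<in> N2 EH v"
      "{w,x} \<in> EH" "{w,y} \<in> EH"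
      unfolding Gaux'_edges_def Gaux_edges_def N_def by blast
    have nxy: "{x,y} \<notin> EH" using p xy unfolding Gaux'_edges_def G_edges_def N_def by auto
    have wN: "w \<notin> N" "w \<noteq> v" and vw: "{v,w} \<notin> EH"
      using xy(5) unfolding N2_def N_def N1_def by auto
    have vx: "{v,x} \<in> EH" and vy: "{v,y} \<in> EH" using xy unfolding N_def N1_def by auto
    have "y \<in> hh (g x) \<or> x \<in> hh (g y)"
    proof (rule ccontr)
      assume H: "\<not> (y \<in> hh (g x) \<or> x \<in> hh (g y))"
      define c1 where "c1 = col {v,x}"
      define c2 where "c2 = col {x,w}"
      define c3 where "c3 = col {w,y}"
      define c4 where "c4 = col {y,v}"
      have e1: "{v,x} \<subseteq> hh c1" unfolding c1_def using edge_in[OF vx] .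
      have e2: "{x,w} \<subseteq> hh c2" unfolding c2_def using edge_in[OF xy(6)] by (metis insert_commute)
      have e3: "{w,y} \<subseteq> hh c3" unfolding c3_def using edge_in[OF xy(7)] .
      have e4: "{y,v} \<subseteq> hh c4" unfolding c4_def using edge_in[OF vy] by (metis insert_commute)
      have E1: "c1 \<in> E" "c2 \<in> E" "c3 \<in> E" "c4 \<in> E"
        unfolding c1_def c2_def c3_def c4_def using EHV vx vy xy(6,7)
        by (auto simp: insert_commute)
      have "c1 \<noteq> c3" using H e3 unfolding c1_def g_def by auto
      moreover have "c2 \<noteq> c4" using H e2 unfolding c4_def g_def by (auto simp: insert_commute)
      moreover have "c1 \<noteq> c2"
      proof
        assume "c1 = c2"
        then have "{v,w} \<in> EH" using adj[of v x w] vx xy(6) wN unfolding c1_def c2_def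
          by (auto simp: insert_commute)
        then show False using vw by simp
      qed
      moreover have "c2 \<noteq> c3"
      proof
        assume "c2 = c3"
        then have "{x,y} \<in> EH" using adj[of x w y] xy unfolding c2_def c3_def
          by (auto simp: insert_commute)
        then show False using nxy by simp
      qed
      moreover have "c3 \<noteq> c4"
      proof
        assume "c3 = c4"
        then have "{w,v} \<in> EH" using adj[of w y v] vy xy(7) wN unfolding c3_def c4_def
          by (auto simp: insert_commute)
        then show False using vw by (simp add: insert_commute)
      qed
      moreover have "c4 \<noteq> c1"
      proof
        assume "c4 = c1"
        then have "{y,x} \<in> EH" using adj[of y v x] vy vx xy unfolding c4_def c1_def
          by (auto simp: insert_commute)
        then show False using nxy by (simp add: insert_commute)
      qed
      moreover have "distinct [v,x,w,y]" using vN wN xy by auto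
      ultimately show False using berge[of v x w y c1 c2 c3 c4] E1 e1 e2 e3 e4 by auto
    qed
    then show "p \<in> (\<lambda>(a,b). {a,b}) ` Q"
    proof
      assume "y \<in> hh (g x)"
      then have "(x,y) \<in> Q" unfolding Q_def using xy by simp
      then show ?thesis using xy(1) by force
    next
      assume "x \<in> hh (g y)"
      then have "(y,x) \<in> Q" unfolding Q_def using xy by simp
      then show ?thesis using xy(1) by (force simp: insert_commute)
    qed
  qed
  define P where "P = Sigma N Col"
  have finP: "finite P" unfolding P_def using finN finCol by simp
  have fib: "card {a \<in> N. g a = C} \<le> 2" for C
  proof (cases "{a \<in> N. g a = C} = {}")
    case True show ?thesis by (simp only: True card.empty)
  next
    case False
    then obtain a0 where a0: "a0 \<in> N" "g a0 = C" by blast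
    have ea0: "{v,a0} \<in> EH" using a0 unfolding N_def N1_def by simp
    have "{a \<in> N. g a = C} \<subseteq> {a. {v,a} \<in> {q\<in>EH. col q = col {v,a0}}}"
      using a0 unfolding g_def N_def N1_def by auto
    moreover have "card {a. {v,a} \<in> {q\<in>EH. col q = col {v,a0}}} \<le> 2"
      by (rule dte_star[OF dte[OF ea0]])
    moreover have "finite {a. {v,a} \<in> {q\<in>EH. col q = col {v,a0}}}"
    proof -
      have "{a. {v,a} \<in> {q\<in>EH. col q = col {v,a0}}} \<subseteq> N" unfolding N_def N1_def by auto
      then show ?thesis using finN finite_subset by blast
    qed
    ultimately show ?thesis by (meson card_mono le_trans)
  qed
  have stepB: "card Q \<le> 2 * card P"
  proof -
    have "Q \<subseteq> (\<Union>bc\<in>P. {a \<in> N. g a = snd bc} \<times> {fst bc})"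
      unfolding Q_def P_def Col_def K_def by auto
    then have "card Q \<le> card (\<Union>bc\<in>P. {a \<in> N. g a = snd bc} \<times> {fst bc})"
      using finP finN by (intro card_mono) auto
    also have "\<dots> \<le> (\<Sum>bc\<in>P. card ({a \<in> N. g a = snd bc} \<times> {fst bc}))"
      using finP by (rule card_UN_le)
    also have "\<dots> \<le> (\<Sum>bc\<in>P. 2)"
      using fib by (intro sum_mono) (simp add: card_cartesian_product)
    finally show ?thesis by simp
  qed
  define Hv where "Hv = {b \<in> N. 4 \<le> card (Col b)}"
  have finHv: "finite Hv" unfolding Hv_def using finN by simp
  have key: False if "x \<in> Hv" "y \<in> Hv" "b \<in> N" "distinct [x,b,y]" "C1 \<in> K" "C2 \<in> K" "C1 \<noteq> C2"
    "x \<in> hh C1" "b \<in> hh C1" "b \<in> hh C2" "y \<in> hh C2" for x y b C1 C2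
  proof -
    have "card (Col y) - card {C1,C2} \<le> card (Col y - {C1,C2})" by (rule diff_card_le_card_Diff) simp
    moreover have "card {C1,C2} \<le> 2" by (simp add: card_insert_if)
    ultimately have "card (Col y - {C1,C2}) > 0" using that(2) unfolding Hv_def by (simp; arith)
    then obtain D where D: "D \<in> Col y" "D \<noteq> C1" "D \<noteq> C2" by (metis card_gt_0_iff ex_in_conv insert_iff DiffE)
    have "card (Col x) - card {C1,C2,D} \<le> card (Col x - {C1,C2,D})" by (rule diff_card_le_card_Diff) simp
    moreover have "card {C1,C2,D} \<le> 3" by (simp add: card_insert_if)
    ultimately have "card (Col x - {C1,C2,D}) > 0" using that(1) unfolding Hv_def by (simp; arith)
    then obtain F where F: "F \<in> Col x" "F \<noteq> C1" "F \<noteq> C2" "F \<noteq> D" by (metis card_gt_0_iff ex_in_conv insert_iff DiffE)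
    have vx: "v \<notin> {x,b,y}" using vN that Hv_def by auto
    show False using berge[of v x b y F C1 C2 D] vx that D F Kv unfolding Col_def by auto
  qed
  have stepC: "card P \<le> 5 * card N"
  proof -
    have "card P = (\<Sum>b\<in>N. card (Col b))" unfolding P_def using finN finCol by simp
    also have "\<dots> = (\<Sum>b\<in>N - Hv. card (Col b)) + (\<Sum>b\<in>Hv. card (Col b))"
      using finN by (metis Hv_def mem_Collect_eq subsetI sum.subset_diff)
    also have "(\<Sum>b\<in>N - Hv. card (Col b)) \<le> (\<Sum>b\<in>N - Hv. 3)"
      by (intro sum_mono) (auto simp: Hv_def)
    also have "(\<Sum>b\<in>Hv. card (Col b)) = card (Sigma Hv Col)" using finHv finCol by simp
    also have "card (Sigma Hv Col) \<le> 2 * card N + card Hv"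
    proof -
      define A1 where "A1 = {bc \<in> Sigma Hv Col. card (Hv \<inter> hh (snd bc)) \<le> 2}"
      define A2 where "A2 = {bc \<in> Sigma Hv Col. \<not> card (Hv \<inter> hh (snd bc)) \<le> 2}"
      have finS: "finite (Sigma Hv Col)" using finHv finCol by simp
      have "Sigma Hv Col = A1 \<union> A2" unfolding A1_def A2_def by auto
      then have "card (Sigma Hv Col) \<le> card A1 + card A2" by (simp add: card_Un_le)
      moreover have "card A1 \<le> 2 * card N"
      proof -
        define B where "B C = (if card (Hv \<inter> hh C) \<le> 2 then Hv \<inter> hh C else {}) \<times> {C}" for C
        have "A1 \<subseteq> (\<Union>C\<in>K. B C)" unfolding A1_def B_def Col_def by auto
        then have "card A1 \<le> card (\<Union>C\<in>K. B C)"
          using finK finHv by (intro card_mono) (auto simp: B_def)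
        also have "\<dots> \<le> (\<Sum>C\<in>K. card (B C))" using finK by (rule card_UN_le)
        also have "\<dots> \<le> (\<Sum>C\<in>K. 2)" by (intro sum_mono) (simp add: B_def card_cartesian_product)
        finally show ?thesis using cardK by simp
      qed
      moreover have "card A2 \<le> card Hv"
      proof (rule card_inj_on_le[of fst])
        show "fst ` A2 \<subseteq> Hv" unfolding A2_def by auto
        show "finite Hv" by (rule finHv)
        show "inj_on fst A2"
        proof (rule inj_onI)
          fix p q assume p: "p \<in> A2" and q: "q \<in> A2" and eq: "fst p = fst q"
          obtain b C1 where pp: "p = (b,C1)" by (cases p)
          obtain C2 where qq: "q = (b,C2)" using eq pp by (cases q) auto
          show "p = q"
          proof (rule ccontr)
            assume "p \<noteq> q"
            then have ne: "C1 \<noteq> C2" using pp qq by simp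
            have b: "b \<in> Hv" "C1 \<in> Col b" "C2 \<in> Col b" "\<not> card (Hv \<inter> hh C1) \<le> 2" "\<not> card (Hv \<inter> hh C2) \<le> 2"
              using p q pp qq unfolding A2_def by auto
            have f1: "finite (Hv \<inter> hh C1)" "finite (Hv \<inter> hh C2)" using finHv by auto
            have "card (Hv \<inter> hh C2) - card {b} \<le> card (Hv \<inter> hh C2 - {b})" by (rule diff_card_le_card_Diff) simp
            then have "card (Hv \<inter> hh C2 - {b}) > 0" using b(5) by (simp; arith)
            then obtain y where y: "y \<in> Hv" "y \<in> hh C2" "y \<noteq> b" by (metis card_gt_0_iff ex_in_conv Int_iff DiffE singletonI)
            have "card (Hv \<inter> hh C1) - card {b,y} \<le> card (Hv \<inter> hh C1 - {b,y})" by (rule diff_card_le_card_Diff) simp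
            moreover have "card {b,y} \<le> 2" by (simp add: card_insert_if)
            ultimately have "card (Hv \<inter> hh C1 - {b,y}) > 0" using b(4) by arith
            then have "Hv \<inter> hh C1 - {b,y} \<noteq> {}" by force
            then obtain x where "x \<in> Hv \<inter> hh C1 - {b,y}" by blast
            then have x: "x \<in> Hv" "x \<in> hh C1" "x \<noteq> b" "x \<noteq> y" by auto
            show False using key[of x y b C1 C2] x y b ne unfolding Col_def Hv_def by auto
          qed
        qed
      qed
      ultimately show ?thesis by simp
    qed
    finally have "card P \<le> 3 * card (N - Hv) + (2 * card N + card Hv)" by simp
    moreover have "card (N - Hv) + card Hv = card N"
    proof -
      have HvN: "Hv \<subseteq> N" unfolding Hv_def by auto
      have "card Hv \<le> card N" using card_mono[OF finN HvN] .
      moreover have "card (N - Hv) = card N - card Hv" using card_Diff_subset[OF finHv HvN] .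
      ultimately show ?thesis by simp
    qed
    ultimately show ?thesis by simp
  qed
  have c1: "card (Gaux'_edges EH v) \<le> 10 * card N"
  proof -
    have "Q \<subseteq> N \<times> N" unfolding Q_def by auto
    then have "finite Q" using finN finite_subset by blast
    then have "card (Gaux'_edges EH v) \<le> card Q"
      using stepA by (meson card_image_le card_mono finite_imageI le_trans)
    then show ?thesis using stepB stepC by simp
  qed
  have c2: "card (Gaux'_edges EH v) \<le> card N * (card N - 1) div 2"
  proof -
    have "Gaux'_edges EH v \<subseteq> {B. B \<subseteq> N \<and> card B = 2}"
      unfolding Gaux'_edges_def Gaux_edges_def N_def by auto
    then have "card (Gaux'_edges EH v) \<le> card {B. B \<subseteq> N \<and> card B = 2}"
      using finN by (intro card_mono) auto
    also have "\<dots> = card N choose 2" using finN by (rule n_subsets)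
    finally show ?thesis by (simp add: choose_two)
  qed
  show ?thesis using final_ineq[OF dpos c1 c2] unfolding N_def .
qed

end
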